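(* Let $G$ be a semi-regular bipartite graph whose line graph $L(G)$ has at least $3$ vertices. Then $\lambda_3(L(G)) \le \frac{|V(L(G))|}{3}$.
   Context: A graph is semi-regular bipartite if it is bipartite with a bipartition $(V_1,V_2)$ such that all vertices of $V_1$ have the same degree $r_1$ and all vertices of $V_2$ have the same degree $r_2$. The line graph $L(G)$ has the edges of $G$ as vertices, two being adjacent when they share an endpoint. $\lambda_3$ denotes the third largest eigenvalue (with multiplicity) of the adjacency matrix. *)

theory Defs
  imports "Jordan_Normal_Form.Char_Poly" "HOL-Computational_Algebra.Polynomial"
begin

definition simple_graph :: "'a set \<Rightarrow> 'a set set \<Rightarrow> bool" where
  "simple_graph V E \<longleftrightarrow> finite V \<and>
     (\<forall>e\<in>E. \<exists>u v. u \<noteq> v \<and> u \<in> V \<and> v \<in> V \<and> e = {u, v})"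

definition degree :: "'a set set \<Rightarrow> 'a \<Rightarrow> nat" where
  "degree E v = card {e \<in> E. v \<in> e}"

definition semi_regular_bipartite :: "'a set \<Rightarrow> 'a set set \<Rightarrow> bool" where
  "semi_regular_bipartite V E \<longleftrightarrow>
     (\<exists>V1 V2 (r1::nat) (r2::nat). V1 \<union> V2 = V \<and> V1 \<inter> V2 = {} \<and>
        (\<forall>e\<in>E. card (e \<inter> V1) = 1 \<and> card (e \<inter> V2) = 1) \<and>
        (\<forall>v\<in>V1. degree E v = r1) \<and> (\<forall>v\<in>V2. degree E v = r2))"

definition line_adj :: "'a set \<Rightarrow> 'a set \<Rightarrow> bool" where
  "line_adj e f \<longleftrightarrow> e \<noteq> f \<and> e \<inter> f \<noteq> {}"

text \<open>Adjacency matrix of a finite graph (W, adj) w.r.t. some fixed enumeration of W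
  (the spectrum does not depend on the choice).\<close>
definition vertex_enum :: "'b set \<Rightarrow> nat \<Rightarrow> 'b" where
  "vertex_enum W = (SOME f. bij_betw f {..<card W} W)"

definition adj_matrix :: "'b set \<Rightarrow> ('b \<Rightarrow> 'b \<Rightarrow> bool) \<Rightarrow> real mat" where
  "adj_matrix W adj = mat (card W) (card W)
     (\<lambda>(i, j). if adj (vertex_enum W i) (vertex_enum W j) then 1 else 0)"

text \<open>Eigenvalues with multiplicity (roots of the characteristic polynomial),
  listed in non-increasing order; the k-th largest is at index k-1.\<close>
definition eigenvalues_desc :: "real mat \<Rightarrow> real list" where
  "eigenvalues_desc A = rev (sorted_list_of_multiset (proots (char_poly A)))"

definition kth_largest_eigenvalue :: "nat \<Rightarrow> real mat \<Rightarrow> real" where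
  "kth_largest_eigenvalue k A = eigenvalues_desc A ! (k - 1)"

end

theory Submission
  imports Defs "Jordan_Normal_Form.Schur_Decomposition"
begin


lemma herm_eig_real:
  fixes A :: "real mat" and a :: complex
  assumes A: "A \<in> carrier_mat n n" and sym: "\<And>i j. i < n \<Longrightarrow> j < n \<Longrightarrow> A$$(i,j) = A$$(j,i)"
    and ev: "eigenvalue (of_real_hom.mat_hom A) a"
  shows "a \<in> \<real>"
proof -
  let ?C = "of_real_hom.mat_hom A :: complex mat"
  from ev obtain v where v: "eigenvector ?C v a" unfolding eigenvalue_def by blast
  have Cc: "?C \<in> carrier_mat n n" using A by simp
  have vc: "v \<in> carrier_vec n" and vnz: "v \<noteq> 0\<^sub>v n" and eq: "?C *\<^sub>v v = a \<cdot>\<^sub>v v"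
    using v Cc unfolding eigenvector_def by auto
  have Cv: "(?C *\<^sub>v v) $ i = (\<Sum>j<n. complex_of_real (A$$(i,j)) * v$j)" if "i < n" for i
    using that A vc by (auto simp: mult_mat_vec_def scalar_prod_def lessThan_atLeast0)
  define s where "s = (\<Sum>i<n. cnj (v$i) * (?C *\<^sub>v v)$i)"
  define N where "N = (\<Sum>i<n. cnj (v$i) * v$i)"
  have s1: "s = a * N" unfolding s_def N_def eq using vc
    by (auto simp: sum_distrib_left intro!: sum.cong)
  have s2: "s = (\<Sum>i<n. \<Sum>j<n. cnj (v$i) * complex_of_real (A$$(i,j)) * v$j)"
    unfolding s_def by (auto simp: Cv sum_distrib_left mult.assoc intro!: sum.cong)
  have "cnj s = (\<Sum>i<n. \<Sum>j<n. v$i * complex_of_real (A$$(i,j)) * cnj (v$j))"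
    unfolding s2 by (simp add: cnj_sum)
  also have "\<dots> = (\<Sum>j<n. \<Sum>i<n. v$i * complex_of_real (A$$(i,j)) * cnj (v$j))"
    by (rule sum.swap)
  also have "\<dots> = s" unfolding s2
    by (auto simp: sym mult.commute mult.left_commute intro!: sum.cong)
  finally have sR: "s \<in> \<real>" using Reals_cnj_iff by blast
  have Nre: "N = of_real (\<Sum>i<n. (Re (v$i))^2 + (Im (v$i))^2)"
    unfolding N_def of_real_sum by (rule sum.cong) (simp_all add: complex_mult_cnj mult.commute)
  obtain i where i: "i < n" "v$i \<noteq> 0" using vnz vc by (metis vec_eq_iff carrier_vecD index_zero_vec(1) index_zero_vec(2))
  have "(\<Sum>i<n. (Re (v$i))^2 + (Im (v$i))^2) > 0"
  proof -
    have "(Re (v$i))^2 + (Im (v$i))^2 > 0" using i complex_neq_0 by blast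
    moreover have "(Re (v$i))^2 + (Im (v$i))^2 \<le> (\<Sum>i<n. (Re (v$i))^2 + (Im (v$i))^2)"
      using i by (intro member_le_sum) auto
    ultimately show ?thesis by linarith
  qed
  hence "N \<noteq> 0" unfolding Nre by (metis of_real_eq_0_iff less_irrefl)
  have "N \<in> \<real>" unfolding Nre by (rule Reals_of_real)
  hence "a = s / N" using s1 \<open>N \<noteq> 0\<close> by simp
  thus ?thesis using sR \<open>N \<in> \<real>\<close> by simp
qed

interpretation rpoly: map_poly_inj_idom_hom "of_real :: real \<Rightarrow> complex" ..

lemma sym_real_split:
  fixes A :: "real mat"
  assumes A: "A \<in> carrier_mat n n" and sym: "\<And>i j. i < n \<Longrightarrow> j < n \<Longrightarrow> A$$(i,j) = A$$(j,i)"
  shows "\<exists>es. char_poly A = (\<Prod>e\<leftarrow>es. [:- e, 1:]) \<and> length es = n"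
proof -
  let ?C = "of_real_hom.mat_hom A :: complex mat"
  have Cc: "?C \<in> carrier_mat n n" using A by simp
  obtain as where as: "char_poly ?C = (\<Prod>a\<leftarrow>as. [:- a, 1:])" "length as = n"
    using char_poly_factorized[OF Cc] by blast
  have real: "a \<in> \<real>" if "a \<in> set as" for a
  proof -
    have "poly (char_poly ?C) a = 0" unfolding as(1) by (rule linear_poly_root[OF that])
    hence "eigenvalue ?C a" using eigenvalue_root_char_poly[OF Cc] by simp
    thus ?thesis using herm_eig_real[OF A] sym by blast
  qed
  define es where "es = map Re as"
  have ases: "as = map of_real es" unfolding es_def using real
    by (induct as) (auto simp: Reals_def)
  have "map_poly of_real (char_poly A) = char_poly ?C"
    by (rule of_real_hom.char_poly_hom[OF A, symmetric])
  also have "\<dots> = (\<Prod>e\<leftarrow>es. [:- of_real e, 1:])" unfolding as(1) ases by (simp add: o_def)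
  also have "\<dots> = map_poly of_real (\<Prod>e\<leftarrow>es. [:- e, 1:])"
  proof (induct es)
    case (Cons e es)
    have "map_poly (of_real :: real \<Rightarrow> complex) [:-e,1:] = [:-of_real e, 1:]" by simp
    then show ?case using Cons by (simp only: list.map prod_list.Cons rpoly.hom_mult o_def)
  qed simp
  finally have "char_poly A = (\<Prod>e\<leftarrow>es. [:- e, 1:])" by (rule rpoly.injectivity)
  moreover have "length es = n" using as(2) es_def by simp
  ultimately show ?thesis by blast
qed


lemma mult_diag_entry:
  fixes X Y :: "'a::comm_ring_1 mat"
  assumes "X \<in> carrier_mat n n" "Y \<in> carrier_mat n n" "i < n"
  shows "(X*Y)$$(i,i) = (\<Sum>k<n. X$$(i,k) * Y$$(k,i))"
  using assms by (auto simp: scalar_prod_def lessThan_atLeast0 intro!: sum.cong)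

lemma trace_comm:
  fixes X Y :: "'a::comm_ring_1 mat"
  assumes X: "X \<in> carrier_mat n n" and Y: "Y \<in> carrier_mat n n"
  shows "(\<Sum>i<n. (X*Y)$$(i,i)) = (\<Sum>i<n. (Y*X)$$(i,i))"
proof -
  have "(\<Sum>i<n. (X*Y)$$(i,i)) = (\<Sum>i<n. \<Sum>k<n. X$$(i,k) * Y$$(k,i))"
    using mult_diag_entry[OF X Y] by simp
  also have "\<dots> = (\<Sum>k<n. \<Sum>i<n. Y$$(k,i) * X$$(i,k))"
    by (subst sum.swap) (simp add: mult.commute)
  also have "\<dots> = (\<Sum>i<n. (Y*X)$$(i,i))"
    using mult_diag_entry[OF Y X] by simp
  finally show ?thesis .
qed

lemma split_moments:
  fixes A :: "real mat"
  assumes A: "A \<in> carrier_mat n n" and cp: "char_poly A = (\<Prod>e\<leftarrow>es. [:- e, 1:])"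
  shows "sum_list es = (\<Sum>i<n. A$$(i,i))"
    and "sum_list (map (\<lambda>e. e^2) es) = (\<Sum>i<n. \<Sum>j<n. A$$(i,j) * A$$(j,i))"
proof -
  obtain B P Q where sd: "schur_decomposition A es = (B,P,Q)" by (cases "schur_decomposition A es") auto
  from schur_decomposition[OF A cp sd] have sim: "similar_mat_wit A B P Q"
    and ut: "upper_triangular B" and dg: "diag_mat B = es" by auto
  from sim A have B: "B \<in> carrier_mat n n" and P: "P \<in> carrier_mat n n" and Q: "Q \<in> carrier_mat n n"
    and PQ: "P * Q = 1\<^sub>m n" and QP: "Q * P = 1\<^sub>m n" and AP: "A = P * B * Q"
    unfolding similar_mat_wit_def Let_def by auto
  have esB: "es = map (\<lambda>i. B$$(i,i)) [0..<n]" using dg B unfolding diag_mat_def by auto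
  have BBd: "(B*B)$$(i,i) = (B$$(i,i))^2" if i: "i < n" for i
  proof -
    have "(B*B)$$(i,i) = (\<Sum>k<n. B$$(i,k) * B$$(k,i))" by (rule mult_diag_entry[OF B B i])
    also have "\<dots> = B$$(i,i) * B$$(i,i) + (\<Sum>k\<in>{..<n}-{i}. B$$(i,k) * B$$(k,i))"
      using i by (subst sum.remove[of _ i]) auto
    also have "(\<Sum>k\<in>{..<n}-{i}. B$$(i,k) * B$$(k,i)) = 0"
    proof (rule sum.neutral, intro ballI)
      fix k assume "k \<in> {..<n} - {i}"
      hence k: "k < n" "k \<noteq> i" by auto
      show "B$$(i,k) * B$$(k,i) = 0"
      proof (cases "k < i")
        case True thus ?thesis using ut B i unfolding upper_triangular_def by auto
      next
        case False hence "i < k" using k by auto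
        thus ?thesis using ut B k unfolding upper_triangular_def by auto
      qed
    qed
    finally show ?thesis by (simp add: power2_eq_square)
  qed
  have tB: "sum_list es = (\<Sum>i<n. B$$(i,i))" unfolding esB
    by (simp add: interv_sum_list_conv_sum_set_nat lessThan_atLeast0)
  have tBB: "sum_list (map (\<lambda>e. e^2) es) = (\<Sum>i<n. (B*B)$$(i,i))" unfolding esB
    by (simp add: interv_sum_list_conv_sum_set_nat lessThan_atLeast0 BBd o_def)
  have QPZ: "Q * (P * Z) = Z" if "Z \<in> carrier_mat n k" for Z k
    using that P Q QP by (simp add: assoc_mult_mat[symmetric, of Q n n P n Z k])
  have "(\<Sum>i<n. A$$(i,i)) = (\<Sum>i<n. (P * (B * Q))$$(i,i))"
    unfolding AP using P B Q by (simp add: assoc_mult_mat)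
  also have "\<dots> = (\<Sum>i<n. ((B * Q) * P)$$(i,i))"
    by (rule trace_comm) (use P B Q in auto)
  also have "(B * Q) * P = B"
    using P B Q QP by (simp add: assoc_mult_mat[of B n n Q n P n])
  finally show "sum_list es = (\<Sum>i<n. A$$(i,i))" using tB by simp
  have AA: "A * A = P * ((B * B) * Q)"
  proof -
    have BQ: "B * Q \<in> carrier_mat n n" using B Q by simp
    show ?thesis unfolding AP using P B Q QPZ[OF BQ] by (simp add: assoc_mult_mat[of _ n n _ n _ n])
  qed
  have "(\<Sum>i<n. (A*A)$$(i,i)) = (\<Sum>i<n. ((B * B) * Q * P)$$(i,i))"
    unfolding AA by (subst trace_comm[of P n]) (use P B Q in \<open>auto simp: assoc_mult_mat[of _ n n _ n _ n]\<close>)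
  also have "(B * B) * Q * P = B * B"
    using P B Q QP by (simp add: assoc_mult_mat[of _ n n _ n _ n])
  finally have "(\<Sum>i<n. (A*A)$$(i,i)) = sum_list (map (\<lambda>e. e^2) es)" using tBB by simp
  moreover have "(\<Sum>i<n. (A*A)$$(i,i)) = (\<Sum>i<n. \<Sum>j<n. A$$(i,j) * A$$(j,i))"
    using mult_diag_entry[OF A A] by simp
  ultimately show "sum_list (map (\<lambda>e. e^2) es) = (\<Sum>i<n. \<Sum>j<n. A$$(i,j) * A$$(j,i))" by simp
qed



lemma third_le:
  fixes xs :: "real list"
  assumes len: "length xs \<ge> 3" and cnt: "length (filter (\<lambda>x. x > t) xs) \<le> 2"
  shows "rev (sort xs) ! 2 \<le> t"
proof (rule ccontr)
  assume c: "\<not> rev (sort xs) ! 2 \<le> t"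
  define ys where "ys = rev (sort xs)"
  have "length ys \<ge> 3" using len unfolding ys_def by simp
  then obtain a b d rest where ys: "ys = a # b # d # rest"
    by (cases ys; cases "tl ys"; cases "tl (tl ys)") auto
  have "sorted (rev ys)" unfolding ys_def by simp
  hence "sorted (rev rest @ [d, b, a])" unfolding ys by simp
  hence "d \<le> b" "b \<le> a" by (auto simp: sorted_append)
  moreover have "d > t" using c unfolding ys_def[symmetric] ys by simp
  ultimately have "length (filter (\<lambda>x. x > t) ys) \<ge> 3" unfolding ys by simp
  moreover have "mset ys = mset xs" unfolding ys_def by simp
  hence "length (filter (\<lambda>x. x > t) ys) = length (filter (\<lambda>x. x > t) xs)"
    by (metis mset_filter size_mset)
  ultimately show False using cnt by simp
qed



locale srb =
  fixes V :: "'a set" and E :: "'a set set" and V1 V2 :: "'a set" and r1 r2 :: nat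
  assumes finV: "finite V"
  and Eform: "\<And>e. e \<in> E \<Longrightarrow> \<exists>u v. u \<noteq> v \<and> u \<in> V \<and> v \<in> V \<and> e = {u,v}"
  and Vun: "V1 \<union> V2 = V" and Vdis: "V1 \<inter> V2 = {}"
  and Ecard: "\<And>e. e \<in> E \<Longrightarrow> card (e \<inter> V1) = 1 \<and> card (e \<inter> V2) = 1"
  and deg1: "\<And>v. v \<in> V1 \<Longrightarrow> degree E v = r1"
  and deg2: "\<And>v. v \<in> V2 \<Longrightarrow> degree E v = r2"
begin

lemma swap: "srb V E V2 V1 r2 r1"
  using finV Eform Vun Vdis Ecard deg1 deg2 by unfold_locales auto

lemma finE: "finite E"
proof -
  have "E \<subseteq> Pow V" using Eform by blast
  thus ?thesis using finV by (meson finite_Pow_iff finite_subset)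
qed

lemma finV1: "finite V1" and finV2: "finite V2" using finV Vun by auto

lemma edge_split: assumes "e \<in> E" shows "\<exists>u v. u \<in> V1 \<and> v \<in> V2 \<and> e = {u,v}"
proof -
  obtain a b where ab: "a \<noteq> b" "a \<in> V" "b \<in> V" "e = {a,b}" using Eform[OF assms] by blast
  have c1: "card (e \<inter> V1) = 1" and c2: "card (e \<inter> V2) = 1" using Ecard[OF assms] by auto
  show ?thesis
  proof (cases "a \<in> V1")
    case True
    have "b \<notin> V1"
    proof
      assume "b \<in> V1" hence "e \<inter> V1 = {a,b}" using ab True by auto
      thus False using c1 ab by simp
    qed
    hence "b \<in> V2" using ab Vun by auto
    thus ?thesis using True ab by blast
  next
    case False
    hence a2: "a \<in> V2" using ab Vun by auto
    have "b \<notin> V2"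
    proof
      assume "b \<in> V2" hence "e \<inter> V2 = {a,b}" using ab a2 by auto
      thus False using c2 ab by simp
    qed
    hence "b \<in> V1" using ab Vun by auto
    thus ?thesis using a2 ab by blast
  qed
qed

lemma edge_two: assumes "e \<in> E" "u \<in> e" "v \<in> e" "u \<noteq> v" shows "e = {u,v}"
  using Eform[OF assms(1)] assms by auto

definition R :: "('a set \<Rightarrow> real) \<Rightarrow> 'a \<Rightarrow> real" where
  "R y w = (\<Sum>f\<in>{f\<in>E. w \<in> f}. y f)"

lemma sum_adj:
  assumes e: "e \<in> E" "e = {u,v}" "u \<in> V1" "v \<in> V2"
  shows "(\<Sum>f\<in>{f\<in>E. line_adj e f}. y f) = R y u + R y v - 2 * y e"
proof -
  have uv: "u \<noteq> v" using e Vdis by auto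
  let ?P = "{f\<in>E. u \<in> f}" and ?Q = "{f\<in>E. v \<in> f}"
  have adj: "{f\<in>E. line_adj e f} = (?P \<union> ?Q) - {e}"
    using e(1,2) unfolding line_adj_def by blast
  have int: "?P \<inter> ?Q = {e}" using edge_two[of _ u v] uv e(1,2) by blast
  have fin: "finite ?P" "finite ?Q" using finE by auto
  have "(\<Sum>f\<in>{f\<in>E. line_adj e f}. y f) = sum y (?P \<union> ?Q) - y e"
    unfolding adj using fin e by (subst sum_diff1) auto
  also have "sum y (?P \<union> ?Q) = sum y ?P + sum y ?Q - y e"
    using sum_Un[OF fin, of y] int by simp
  finally show ?thesis unfolding R_def by simp
qed

lemma R_one1: "u \<in> V1 \<Longrightarrow> R (\<lambda>_. 1) u = real r1"
  using deg1 unfolding R_def degree_def by simp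
lemma R_one2: "v \<in> V2 \<Longrightarrow> R (\<lambda>_. 1) v = real r2"
  using deg2 unfolding R_def degree_def by simp

lemma card_adj: assumes "e \<in> E" shows "real (card {f\<in>E. line_adj e f}) = real r1 + real r2 - 2"
proof -
  obtain u v where uv: "u \<in> V1" "v \<in> V2" "e = {u,v}" using edge_split[OF assms] by blast
  have "real (card {f\<in>E. line_adj e f}) = (\<Sum>f\<in>{f\<in>E. line_adj e f}. (1::real))" by simp
  also have "\<dots> = real r1 + real r2 - 2" using sum_adj[OF assms uv(3,1,2), of "\<lambda>_. 1"] R_one1 R_one2 uv by simp
  finally show ?thesis .
qed


lemma eig_le:
  assumes eig: "\<And>e. e \<in> E \<Longrightarrow> lam * y e = (\<Sum>f\<in>{f\<in>E. line_adj e f}. y f)"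
    and e0: "e0 \<in> E" "y e0 \<noteq> 0"
  shows "lam \<le> real r1 + real r2 - 2"
proof -
  let ?M = "Max ((\<lambda>f. \<bar>y f\<bar>) ` E)"
  have fin: "finite ((\<lambda>f. \<bar>y f\<bar>) ` E)" using finE by simp
  have "?M \<in> (\<lambda>f. \<bar>y f\<bar>) ` E" using fin e0 by (intro Max_in) auto
  then obtain e where e: "e \<in> E" "\<bar>y e\<bar> = ?M" by auto
  have ge: "\<bar>y f\<bar> \<le> \<bar>y e\<bar>" if "f \<in> E" for f using e that fin by auto
  have pos: "\<bar>y e\<bar> > 0" using ge[OF e0(1)] e0(2) by linarith
  have "\<bar>lam\<bar> * \<bar>y e\<bar> = \<bar>\<Sum>f\<in>{f\<in>E. line_adj e f}. y f\<bar>" using eig[OF e(1)] by (simp add: abs_mult[symmetric])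
  also have "\<dots> \<le> (\<Sum>f\<in>{f\<in>E. line_adj e f}. \<bar>y f\<bar>)" by (rule sum_abs)
  also have "\<dots> \<le> (\<Sum>f\<in>{f\<in>E. line_adj e f}. \<bar>y e\<bar>)" by (rule sum_mono) (use ge in auto)
  also have "\<dots> = (real r1 + real r2 - 2) * \<bar>y e\<bar>" using card_adj[OF e(1)] by simp
  finally have "\<bar>lam\<bar> \<le> real r1 + real r2 - 2" using pos by (meson mult_le_cancel_right_pos)
  thus ?thesis by linarith
qed

lemma eig_star:
  assumes r1: "r1 = 1"
    and eig: "\<And>e. e \<in> E \<Longrightarrow> lam * y e = (\<Sum>f\<in>{f\<in>E. line_adj e f}. y f)"
    and e0: "e0 \<in> E" "y e0 \<noteq> 0"
  shows "lam = real r2 - 1 \<or> lam = -1"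
proof -
  have key: "(lam + 1) * y e = R y v" if e: "e \<in> E" "e = {u,v}" "u \<in> V1" "v \<in> V2" for e u v
  proof -
    have "card {f\<in>E. u \<in> f} = 1" using deg1[OF e(3)] r1 unfolding degree_def by simp
    moreover have "e \<in> {f\<in>E. u \<in> f}" using e by auto
    ultimately have "{f\<in>E. u \<in> f} = {e}" by (metis card_1_singletonE singletonD)
    hence "R y u = y e" unfolding R_def by simp
    thus ?thesis using eig[OF e(1)] sum_adj[OF e] by (simp add: algebra_simps)
  qed
  have Rw: "(lam + 1) * R y w = real r2 * R y w" if w: "w \<in> V2" for w
  proof -
    have "(lam + 1) * R y w = (\<Sum>f\<in>{f\<in>E. w \<in> f}. (lam + 1) * y f)"
      unfolding R_def by (simp add: sum_distrib_left)
    also have "\<dots> = (\<Sum>f\<in>{f\<in>E. w \<in> f}. R y w)"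
    proof (rule sum.cong[OF refl])
      fix f assume f: "f \<in> {f\<in>E. w \<in> f}"
      then obtain a b where ab: "a \<in> V1" "b \<in> V2" "f = {a,b}" using edge_split by blast
      have "w = b" using f ab w Vdis by auto
      thus "(lam + 1) * y f = R y w" using key[of f a b] f ab by simp
    qed
    also have "\<dots> = real r2 * R y w" using deg2[OF w] unfolding degree_def by simp
    finally show ?thesis .
  qed
  show ?thesis
  proof (rule disjCI)
    assume ne: "lam \<noteq> - 1"
    show "lam = real r2 - 1"
    proof (rule ccontr)
      assume ne2: "lam \<noteq> real r2 - 1"
      obtain a b where ab: "a \<in> V1" "b \<in> V2" "e0 = {a,b}" using edge_split[OF e0(1)] by blast
      have "(lam + 1 - real r2) * R y b = 0" using Rw[OF ab(2)] by (simp add: algebra_simps)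
      hence "R y b = 0" using ne2 by simp
      hence "(lam + 1) * y e0 = 0" using key[OF e0(1) ab(3,1,2)] by simp
      thus False using ne e0(2) by simp
    qed
  qed
qed

lemma eig_complete:
  assumes comp: "\<And>u v. u \<in> V1 \<Longrightarrow> v \<in> V2 \<Longrightarrow> {u,v} \<in> E"
    and eig: "\<And>e. e \<in> E \<Longrightarrow> lam * y e = (\<Sum>f\<in>{f\<in>E. line_adj e f}. y f)"
    and e0: "e0 \<in> E" "y e0 \<noteq> 0"
  shows "lam = real r1 + real r2 - 2 \<or> lam = real r1 - 2 \<or> lam = real r2 - 2 \<or> lam = -2"
proof -
  have P: "{f\<in>E. u \<in> f} = (\<lambda>v. {u,v}) ` V2" if u: "u \<in> V1" for u
  proof
    show "{f\<in>E. u \<in> f} \<subseteq> (\<lambda>v. {u,v}) ` V2"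
    proof
      fix f assume f: "f \<in> {f\<in>E. u \<in> f}"
      then obtain a b where ab: "a \<in> V1" "b \<in> V2" "f = {a,b}" using edge_split by blast
      have "u = a" using f ab u Vdis by auto
      thus "f \<in> (\<lambda>v. {u,v}) ` V2" using ab by auto
    qed
    show "(\<lambda>v. {u,v}) ` V2 \<subseteq> {f\<in>E. u \<in> f}" using comp u by auto
  qed
  have Q: "{f\<in>E. v \<in> f} = (\<lambda>u. {u,v}) ` V1" if v: "v \<in> V2" for v
  proof
    show "{f\<in>E. v \<in> f} \<subseteq> (\<lambda>u. {u,v}) ` V1"
    proof
      fix f assume f: "f \<in> {f\<in>E. v \<in> f}"
      then obtain a b where ab: "a \<in> V1" "b \<in> V2" "f = {a,b}" using edge_split by blast
      have "v = b" using f ab v Vdis by auto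
      thus "f \<in> (\<lambda>u. {u,v}) ` V1" using ab by auto
    qed
    show "(\<lambda>u. {u,v}) ` V1 \<subseteq> {f\<in>E. v \<in> f}" using comp v by auto
  qed
  have injP: "inj_on (\<lambda>v. {u,v}) V2" if u: "u \<in> V1" for u
    using u Vdis by (auto simp: inj_on_def doubleton_eq_iff)
  have injQ: "inj_on (\<lambda>u. {u,v}) V1" if v: "v \<in> V2" for v
    using v Vdis by (auto simp: inj_on_def doubleton_eq_iff)
  define z where "z u v = y {u,v}" for u v
  define Ru where "Ru u = (\<Sum>v\<in>V2. z u v)" for u
  define Cv where "Cv v = (\<Sum>u\<in>V1. z u v)" for v
  have RRu: "R y u = Ru u" if "u \<in> V1" for u
    unfolding R_def P[OF that] Ru_def z_def by (subst sum.reindex[OF injP[OF that]]) (simp add: o_def)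
  have RCv: "R y v = Cv v" if "v \<in> V2" for v
    unfolding R_def Q[OF that] Cv_def z_def by (subst sum.reindex[OF injQ[OF that]]) (simp add: o_def)
  obtain u0 v0 where uv0: "u0 \<in> V1" "v0 \<in> V2" "e0 = {u0,v0}" using edge_split[OF e0(1)] by blast
  have cV2: "card V2 = r1" using deg1[OF uv0(1)] unfolding degree_def P[OF uv0(1)]
    using card_image[OF injP[OF uv0(1)]] by simp
  have cV1: "card V1 = r2" using deg2[OF uv0(2)] unfolding degree_def Q[OF uv0(2)]
    using card_image[OF injQ[OF uv0(2)]] by simp
  have eq: "(lam + 2) * z u v = Ru u + Cv v" if "u \<in> V1" "v \<in> V2" for u v
  proof -
    have "{u,v} \<in> E" using comp that by simp
    from eig[OF this] sum_adj[OF this refl that] RRu[OF that(1)] RCv[OF that(2)]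
    show ?thesis unfolding z_def by (simp add: algebra_simps)
  qed
  define T where "T = (\<Sum>v\<in>V2. Cv v)"
  have T2: "(\<Sum>u\<in>V1. Ru u) = T" unfolding T_def Ru_def Cv_def by (rule sum.swap)
  have h1: "(lam + 2) * Ru u = real r1 * Ru u + T" if u: "u \<in> V1" for u
  proof -
    have "(lam + 2) * Ru u = (\<Sum>v\<in>V2. (lam + 2) * z u v)" unfolding Ru_def by (simp add: sum_distrib_left)
    also have "\<dots> = (\<Sum>v\<in>V2. Ru u + Cv v)" using eq u by simp
    also have "\<dots> = real r1 * Ru u + T" unfolding T_def using cV2 by (simp add: sum.distrib)
    finally show ?thesis .
  qed
  have h2: "(lam + 2) * Cv v = real r2 * Cv v + T" if v: "v \<in> V2" for v
  proof -
    have "(lam + 2) * Cv v = (\<Sum>u\<in>V1. (lam + 2) * z u v)" unfolding Cv_def by (simp add: sum_distrib_left)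
    also have "\<dots> = (\<Sum>u\<in>V1. Ru u + Cv v)" using eq v by simp
    also have "\<dots> = real r2 * Cv v + T" using T2 cV1 by (simp add: sum.distrib)
    finally show ?thesis .
  qed
  have h3: "(lam + 2) * T = (real r1 + real r2) * T"
  proof -
    have "(lam + 2) * T = (\<Sum>u\<in>V1. (lam + 2) * Ru u)" unfolding T2[symmetric] by (simp add: sum_distrib_left)
    also have "\<dots> = (\<Sum>u\<in>V1. real r1 * Ru u + T)" using h1 by simp
    also have "\<dots> = real r1 * T + real r2 * T" using T2 cV1 by (simp add: sum.distrib sum_distrib_left[symmetric])
    finally show ?thesis by (simp add: algebra_simps)
  qed
  show ?thesis
  proof (rule ccontr)
    assume ne: "\<not> ?thesis"
    have "(lam + 2 - (real r1 + real r2)) * T = 0" using h3 by (simp add: algebra_simps)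
    moreover have "lam + 2 - (real r1 + real r2) \<noteq> 0" using ne by simp
    ultimately have T0: "T = 0" by simp
    have "(lam + 2 - real r1) * Ru u0 = 0" using h1[OF uv0(1)] T0 by (simp add: algebra_simps)
    moreover have "lam + 2 - real r1 \<noteq> 0" using ne by simp
    ultimately have Ru0: "Ru u0 = 0" by simp
    have "(lam + 2 - real r2) * Cv v0 = 0" using h2[OF uv0(2)] T0 by (simp add: algebra_simps)
    moreover have "lam + 2 - real r2 \<noteq> 0" using ne by simp
    ultimately have Cv0: "Cv v0 = 0" by simp
    have "(lam + 2) * z u0 v0 = 0" using eq[OF uv0(1,2)] Ru0 Cv0 by simp
    thus False using ne e0(2) uv0(3) unfolding z_def by simp
  qed
qed


lemma double_count: "card E = card V1 * r1"
proof -
  have "(\<Sum>u\<in>V1. \<Sum>f\<in>{f\<in>E. u \<in> f}. (1::nat)) = (\<Sum>f\<in>E. \<Sum>u | u \<in> V1 \<and> u \<in> f. (1::nat))"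
    by (rule sum.swap_restrict[OF finV1 finE])
  also have "\<dots> = (\<Sum>f\<in>E. 1)"
  proof (rule sum.cong[OF refl])
    fix f assume "f \<in> E"
    hence "card (f \<inter> V1) = 1" using Ecard by auto
    moreover have "{u. u \<in> V1 \<and> u \<in> f} = f \<inter> V1" by auto
    ultimately show "(\<Sum>u | u \<in> V1 \<and> u \<in> f. (1::nat)) = 1" by simp
  qed
  also have "\<dots> = card E" by simp
  finally have "card E = (\<Sum>u\<in>V1. card {f\<in>E. u \<in> f})" by simp
  also have "\<dots> = (\<Sum>u\<in>V1. r1)" using deg1 unfolding degree_def by simp
  finally show ?thesis by simp
qed

lemma noncomplete_lt:
  assumes u: "u \<in> V1" and v: "v \<in> V2" and nE: "{u,v} \<notin> E"
  shows "r1 < card V2"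
proof -
  have "{f\<in>E. u \<in> f} \<subseteq> (\<lambda>w. {u,w}) ` (V2 - {v})"
  proof
    fix f assume f: "f \<in> {f\<in>E. u \<in> f}"
    then obtain a b where ab: "a \<in> V1" "b \<in> V2" "f = {a,b}" using edge_split by blast
    have "u = a" using f ab u Vdis by auto
    moreover have "b \<noteq> v" using nE f ab \<open>u = a\<close> by auto
    ultimately show "f \<in> (\<lambda>w. {u,w}) ` (V2 - {v})" using ab by auto
  qed
  hence "card {f\<in>E. u \<in> f} \<le> card ((\<lambda>w. {u,w}) ` (V2 - {v}))"
    using finV2 by (intro card_mono) auto
  also have "\<dots> \<le> card (V2 - {v})" by (rule card_image_le) (use finV2 in auto)
  also have "\<dots> < card V2" using finV2 v by (rule card_Diff1_less)
  finally show ?thesis using deg1[OF u] unfolding degree_def by simp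
qed

lemma r1_pos: assumes "E \<noteq> {}" shows "r1 \<ge> 1"
proof -
  obtain e where e: "e \<in> E" using assms by blast
  then obtain u v where uv: "u \<in> V1" "v \<in> V2" "e = {u,v}" using edge_split by blast
  have "e \<in> {f\<in>E. u \<in> f}" using e uv by auto
  moreover have "finite {f\<in>E. u \<in> f}" using finE by simp
  ultimately have "card {f\<in>E. u \<in> f} \<noteq> 0" by auto
  thus ?thesis using deg1[OF uv(1)] unfolding degree_def by simp
qed

end


lemma sum_list_filter_le:
  fixes g :: "'b \<Rightarrow> real"
  assumes "\<forall>x\<in>set xs. g x \<ge> 0"
  shows "sum_list (map g (filter P xs)) \<le> sum_list (map g xs)"
  using assms by (induct xs) auto

lemma sum_list_ge_len:
  fixes g :: "'b \<Rightarrow> real"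
  assumes "\<forall>x\<in>set xs. g x \<ge> c"
  shows "sum_list (map g xs) \<ge> real (length xs) * c"
  using assms by (induct xs) (auto simp: algebra_simps)

lemma length_filter_mono':
  assumes "\<forall>x\<in>set xs. P x \<longrightarrow> Q x"
  shows "length (filter P xs) \<le> length (filter Q xs)"
  using assms by (induct xs) auto

lemma star_count:
  fixes xs :: "real list" and c :: real
  assumes c: "c \<ge> 0" and mem: "\<forall>x\<in>set xs. x = c \<or> x = -1" and s: "sum_list xs = 0"
  shows "length (filter (\<lambda>x. x > real (length xs) / 3) xs) \<le> 2"
proof (rule ccontr)
  assume "\<not> ?thesis"
  hence F3: "length (filter (\<lambda>x. x > real (length xs) / 3) xs) \<ge> 3" by simp
  define k where "k = length (filter (\<lambda>x. x = c) xs)"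
  have sumk: "sum_list xs = (c + 1) * real k - real (length xs)" unfolding k_def using mem
    by (induct xs) (auto simp: algebra_simps)
  hence len: "real (length xs) = (c + 1) * real k" using s by simp
  have "\<forall>x\<in>set xs. x > real (length xs) / 3 \<longrightarrow> x = c" using mem by force
  hence "length (filter (\<lambda>x. x > real (length xs) / 3) xs) \<le> k" unfolding k_def
    by (rule length_filter_mono')
  hence k3: "real k \<ge> 3" using F3 by simp
  obtain x where "x \<in> set (filter (\<lambda>x. x > real (length xs) / 3) xs)" using F3
    by (metis length_0_conv list.set_sel(1) not_numeral_le_zero)
  hence "c > real (length xs) / 3" using mem by force
  hence "3 * c > (c + 1) * real k" using len by simp
  moreover have "(c + 1) * real k \<ge> (c + 1) * 3" using k3 c by (intro mult_left_mono) auto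
  ultimately show False by simp
qed

lemma rook_count:
  fixes xs :: "real list" and p q :: nat
  assumes p: "p \<ge> 2" and q: "q \<ge> 2" and len: "length xs = p * q"
    and mem: "\<forall>x\<in>set xs. x = real p + real q - 2 \<or> x = real p - 2 \<or> x = real q - 2 \<or> x = -2"
    and s1: "sum_list xs = 0" and s2: "sum_list (map (\<lambda>x. x^2) xs) = real (p * q) * (real p + real q - 2)"
  shows "length (filter (\<lambda>x. x > real (length xs) / 3) xs) \<le> 2"
proof (rule ccontr)
  define t where "t = real (p * q) / 3"
  define F where "F = filter (\<lambda>x. x > t) xs"
  define D where "D = real p + real q - 2"
  define g where "g x = x * (x + 2)" for x :: real
  assume a: "\<not> ?thesis"
  have lt: "real (length xs) / 3 = t" unfolding t_def len by simp
  have F3: "length F \<ge> 3" using a unfolding F_def lt by simp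
  have pr: "real p \<ge> 2" "real q \<ge> 2" using p q by auto
  have tpos: "t > 0" unfolding t_def using p q by simp
  have gnn: "\<forall>x\<in>set xs. g x \<ge> 0" using mem pr unfolding g_def by auto
  have sg: "sum_list (map g xs) = real (p * q) * D"
  proof -
    have "sum_list (map g xs) = sum_list (map (\<lambda>x. x^2) xs) + 2 * sum_list xs"
      unfolding g_def by (induct xs) (auto simp: algebra_simps power2_eq_square)
    thus ?thesis using s1 s2 D_def by simp
  qed
  have gF: "sum_list (map g F) \<le> real (p * q) * D"
    using sum_list_filter_le[OF gnn] sg unfolding F_def by simp
  have Fmem: "\<forall>x\<in>set F. x > t \<and> (x = D \<or> x = real p - 2 \<or> x = real q - 2)"
    using mem tpos unfolding F_def D_def by auto
  show False
  proof (cases "\<forall>x\<in>set F. x = D")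
    case True
    have "sum_list (map g F) \<ge> real (length F) * g D" using True by (intro sum_list_ge_len) auto
    moreover have "real (length F) * g D \<ge> 3 * g D" using F3 gnn pr unfolding g_def D_def
      by (intro mult_right_mono) auto
    ultimately have "3 * g D \<le> real (p * q) * D" using gF by simp
    hence "D * (3 * (D + 2)) \<le> D * real (p * q)" unfolding g_def by (simp add: algebra_simps)
    moreover have "D > 0" unfolding D_def using pr by simp
    ultimately have A: "3 * (D + 2) \<le> real (p * q)" by simp
    obtain x where "x \<in> set F" using F3 by (metis length_0_conv list.set_sel(1) not_numeral_le_zero)
    hence "D > t" using True Fmem by auto
    thus False using A unfolding t_def by simp
  next
    case False
    then obtain x where x: "x \<in> set F" "x \<noteq> D" by blast
    have "x > t" "x = real p - 2 \<or> x = real q - 2" using Fmem x by auto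
    show False
    proof -
      have small: "r = 2" "real s - 2 > 2 * real s / 3" if rs: "real s - 2 > real (r * s) / 3" "r \<ge> 2" "s \<ge> 2" for r s :: nat
      proof -
        show "r = 2"
        proof (rule ccontr)
          assume "r \<noteq> 2" hence "real r \<ge> 3" using rs(2) by simp
          hence "real r * real s \<ge> 3 * real s" by (intro mult_right_mono) auto
          moreover have "real (r * s) = real r * real s" by simp
          ultimately show False using rs(1) by linarith
        qed
        thus "real s - 2 > 2 * real s / 3" using rs(1) by simp
      qed
      have bound: False if r2: "r = 2" and big: "real s - 2 > 2 * real s / 3"
        and Fm: "\<forall>x\<in>set F. x = real r + real s - 2 \<or> x = real s - 2"
        and gFb: "sum_list (map g F) \<le> real (r * s) * (real r + real s - 2)" for r s :: nat
      proof -
        have sp: "real s > 6" using big by simp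
        have "\<forall>x\<in>set F. g x \<ge> (real s - 2) * real s"
        proof
          fix x assume "x \<in> set F"
          hence "x = real s \<or> x = real s - 2" using Fm r2 by auto
          thus "g x \<ge> (real s - 2) * real s"
          proof
            assume xe: "x = real s" show ?thesis unfolding g_def xe using sp by (simp add: algebra_simps)
          next
            assume xe: "x = real s - 2" show ?thesis unfolding g_def xe by (simp add: algebra_simps)
          qed
        qed
        hence "sum_list (map g F) \<ge> real (length F) * ((real s - 2) * real s)" by (rule sum_list_ge_len)
        moreover have "real (length F) * ((real s - 2) * real s) \<ge> 3 * ((real s - 2) * real s)"
          using F3 sp by (intro mult_right_mono) auto
        ultimately have "3 * ((real s - 2) * real s) \<le> 2 * real s * real s" using gFb r2 by simp
        hence "real s * (3 * (real s - 2)) \<le> real s * (2 * real s)" by (simp add: algebra_simps)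
        hence "3 * (real s - 2) \<le> 2 * real s" using sp by simp
        thus False using sp by simp
      qed
      show False
      proof (cases "x = real q - 2")
        case True
        hence "real q - 2 > real (p * q) / 3" using \<open>x > t\<close> t_def by simp
        from small[OF this p q] have "p = 2" "real q - 2 > 2 * real q / 3" .
        moreover have "\<forall>x\<in>set F. x = real p + real q - 2 \<or> x = real q - 2"
          using Fmem \<open>p = 2\<close> tpos unfolding D_def by force
        ultimately show False using bound[of p q] gF unfolding D_def by blast
      next
        case False
        hence xp: "x = real p - 2" using \<open>x = real p - 2 \<or> x = real q - 2\<close> by simp
        hence "real p - 2 > real (q * p) / 3" using \<open>x > t\<close> t_def by (simp add: mult.commute)
        from small[OF this q p] have "q = 2" "real p - 2 > 2 * real p / 3" .
        moreover have "\<forall>x\<in>set F. x = real q + real p - 2 \<or> x = real p - 2"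
          using Fmem \<open>q = 2\<close> tpos unfolding D_def by force
        moreover have "sum_list (map g F) \<le> real (q * p) * (real q + real p - 2)"
          using gF unfolding D_def by (simp add: algebra_simps)
        ultimately show False using bound[of q p] by blast
      qed
    qed
  qed
qed


lemma enum_bij: assumes "finite W" shows "bij_betw (vertex_enum W) {..<card W} W"
proof -
  obtain h where "bij_betw h {0..<card W} W" using ex_bij_betw_nat_finite[OF assms] by blast
  hence "\<exists>f. bij_betw f {..<card W} W" by (auto simp: lessThan_atLeast0)
  thus ?thesis unfolding vertex_enum_def by (rule someI_ex)
qed

lemma adj_carrier: "adj_matrix W adj \<in> carrier_mat (card W) (card W)"
  unfolding adj_matrix_def by simp

lemma adj_entry: "i < card W \<Longrightarrow> j < card W \<Longrightarrow>
  adj_matrix W adj $$ (i,j) = (if adj (vertex_enum W i) (vertex_enum W j) then 1 else 0)"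
  unfolding adj_matrix_def by simp

lemma adj_eigvec:
  assumes fin: "finite W" and v: "eigenvector (adj_matrix W adj) v lam"
  shows "\<exists>y. (\<exists>e0\<in>W. y e0 \<noteq> 0) \<and> (\<forall>e\<in>W. lam * y e = (\<Sum>f\<in>{f\<in>W. adj e f}. y f))"
proof -
  let ?n = "card W" and ?A = "adj_matrix W adj" and ?en = "vertex_enum W"
  have bij: "bij_betw ?en {..<?n} W" by (rule enum_bij[OF fin])
  define iv where "iv = the_inv_into {..<?n} ?en"
  define y where "y f = v $ (iv f)" for f
  have A: "?A \<in> carrier_mat ?n ?n" by (rule adj_carrier)
  have vc: "v \<in> carrier_vec ?n" and vnz: "v \<noteq> 0\<^sub>v ?n" and eq: "?A *\<^sub>v v = lam \<cdot>\<^sub>v v"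
    using v A unfolding eigenvector_def by auto
  have inj: "inj_on ?en {..<?n}" using bij by (rule bij_betw_imp_inj_on)
  have inv_en: "iv (?en j) = j" if "j < ?n" for j
    unfolding iv_def using inj that by (simp add: the_inv_into_f_f)
  have en_inv: "?en (iv e) = e" "iv e < ?n" if "e \<in> W" for e
  proof -
    show "?en (iv e) = e" unfolding iv_def using bij that by (simp add: f_the_inv_into_f_bij_betw)
    have "iv e \<in> {..<?n}" unfolding iv_def
      by (rule the_inv_into_into[OF inj]) (use bij that in \<open>auto simp: bij_betw_def\<close>)
    thus "iv e < ?n" by simp
  qed
  have "lam * y e = (\<Sum>f\<in>{f\<in>W. adj e f}. y f)" if e: "e \<in> W" for e
  proof -
    define i where "i = iv e"
    have i: "i < ?n" "?en i = e" using en_inv[OF e] i_def by auto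
    have "lam * y e = (?A *\<^sub>v v) $ i" unfolding eq y_def i_def using en_inv[OF e] vc by simp
    also have "\<dots> = (\<Sum>j<?n. ?A $$ (i,j) * v $ j)"
      using i A vc by (auto simp: mult_mat_vec_def scalar_prod_def lessThan_atLeast0)
    also have "\<dots> = (\<Sum>j<?n. (\<lambda>f. if adj e f then y f else 0) (?en j))"
      by (rule sum.cong[OF refl]) (use i in \<open>auto simp: adj_entry y_def inv_en\<close>)
    also have "\<dots> = (\<Sum>f\<in>W. if adj e f then y f else 0)"
      by (rule sum.reindex_bij_betw[OF bij])
    also have "\<dots> = (\<Sum>f\<in>{f\<in>W. adj e f}. y f)"
      using fin by (simp add: sum.inter_filter)
    finally show ?thesis .
  qed
  moreover obtain j where j: "j < ?n" "v $ j \<noteq> 0" using vnz vc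
    by (metis vec_eq_iff carrier_vecD index_zero_vec(1) index_zero_vec(2))
  hence "?en j \<in> W" "y (?en j) \<noteq> 0" using bij inv_en unfolding y_def by (auto simp: bij_betw_def)
  ultimately show ?thesis by blast
qed

lemma adj_moments:
  assumes fin: "finite W" and irr: "\<And>a. \<not> adj a a" and sy: "\<And>a b. adj a b = adj b a"
    and deg: "\<And>e. e \<in> W \<Longrightarrow> real (card {f\<in>W. adj e f}) = D"
  shows "(\<Sum>i<card W. adj_matrix W adj $$ (i,i)) = 0"
    and "(\<Sum>i<card W. \<Sum>j<card W. adj_matrix W adj $$ (i,j) * adj_matrix W adj $$ (j,i)) = real (card W) * D"
proof -
  let ?n = "card W" and ?A = "adj_matrix W adj" and ?en = "vertex_enum W"
  have bij: "bij_betw ?en {..<?n} W" by (rule enum_bij[OF fin])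
  show "(\<Sum>i<card W. adj_matrix W adj $$ (i,i)) = 0" using irr by (simp add: adj_entry)
  have row: "(\<Sum>j<?n. ?A $$ (i,j) * ?A $$ (j,i)) = D" if i: "i < ?n" for i
  proof -
    have ei: "?en i \<in> W" using bij i by (auto simp: bij_betw_def)
    have "(\<Sum>j<?n. ?A $$ (i,j) * ?A $$ (j,i)) = (\<Sum>j<?n. (\<lambda>f. if adj (?en i) f then (1::real) else 0) (?en j))"
      by (rule sum.cong[OF refl]) (use i sy in \<open>auto simp: adj_entry\<close>)
    also have "\<dots> = (\<Sum>f\<in>W. if adj (?en i) f then (1::real) else 0)"
      by (rule sum.reindex_bij_betw[OF bij])
    also have "\<dots> = (\<Sum>f\<in>{f\<in>W. adj (?en i) f}. (1::real))"
      using fin by (rule sum.inter_filter[symmetric])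
    also have "\<dots> = real (card {f\<in>W. adj (?en i) f})" by simp
    finally show ?thesis using deg[OF ei] by simp
  qed
  thus "(\<Sum>i<card W. \<Sum>j<card W. adj_matrix W adj $$ (i,j) * adj_matrix W adj $$ (j,i)) = real (card W) * D"
    by simp
qed

lemma proots_linear_prod: "proots (\<Prod>e\<leftarrow>es. [:- e, 1:]) = mset (es :: real list)"
proof (induct es)
  case (Cons e es)
  have "[:- e, 1:] \<noteq> 0" by simp
  moreover have "(\<Prod>e\<leftarrow>es. [:- e, 1:]) \<noteq> 0" by (auto simp: prod_list_zero_iff)
  ultimately have "proots ([:- e, 1:] * (\<Prod>e\<leftarrow>es. [:- e, 1:])) = proots [:- e, 1:] + proots (\<Prod>e\<leftarrow>es. [:- e, 1:])"
    by (rule proots_mult)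
  moreover have "proots [:- e, 1:] = {#e#}" using proots_linear_factor[of "-e"] by simp
  ultimately show ?case using Cons by simp
qed simp

lemma arith_d:
  fixes r1 r2 n1 n2 m :: nat
  assumes "r1 \<ge> 2" "r2 \<ge> 2" "n2 \<ge> r1 + 1" "n1 \<ge> r2 + 1" "m = n1 * r1" "m = n2 * r2"
  shows "3 * (r1 + r2) \<le> m + 6"
proof -
  have "(r2 + 1) * r1 \<le> n1 * r1" using assms(4) by (rule mult_right_mono) simp
  hence m1: "m \<ge> (r2 + 1) * r1" using assms(5) by simp
  have "(r1 + 1) * r2 \<le> n2 * r2" using assms(3) by (rule mult_right_mono) simp
  hence m2: "m \<ge> (r1 + 1) * r2" using assms(6) by simp
  show ?thesis
  proof (cases "r1 = 2 \<or> r2 = 2")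
    case True
    thus ?thesis
    proof
      assume a: "r1 = 2"
      with m2 have "m \<ge> 3 * r2" by simp
      thus ?thesis using a by simp
    next
      assume a: "r2 = 2"
      with m1 have "m \<ge> 3 * r1" by (simp add: mult.commute)
      thus ?thesis using a by simp
    qed
  next
    case False
    hence "r1 \<ge> 3" "r2 \<ge> 3" using assms by auto
    hence "(int r1 - 2) * (int r2 - 3) \<ge> 0" by simp
    hence "int r1 * int r2 + 6 \<ge> 3 * int r1 + 2 * int r2" by (simp add: algebra_simps)
    moreover have "int m \<ge> int r1 * int r2 + int r2" using m2 by (simp add: algebra_simps flip: of_nat_mult of_nat_add)
    ultimately have "3 * int r1 + 3 * int r2 \<le> int m + 6" by linarith
    thus ?thesis by arith
  qed
qed


context srb
begin

lemma complete_cardV1: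
  assumes comp: "\<And>u v. u \<in> V1 \<Longrightarrow> v \<in> V2 \<Longrightarrow> {u,v} \<in> E" and v: "v \<in> V2"
  shows "card V1 = r2"
proof -
  have Q: "{f\<in>E. v \<in> f} = (\<lambda>u. {u,v}) ` V1"
  proof
    show "{f\<in>E. v \<in> f} \<subseteq> (\<lambda>u. {u,v}) ` V1"
    proof
      fix f assume f: "f \<in> {f\<in>E. v \<in> f}"
      then obtain a b where ab: "a \<in> V1" "b \<in> V2" "f = {a,b}" using edge_split by blast
      have "v = b" using f ab v Vdis by auto
      thus "f \<in> (\<lambda>u. {u,v}) ` V1" using ab by auto
    qed
    show "(\<lambda>u. {u,v}) ` V1 \<subseteq> {f\<in>E. v \<in> f}" using comp v by auto
  qed
  have injQ: "inj_on (\<lambda>u. {u,v}) V1"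
    using v Vdis by (auto simp: inj_on_def doubleton_eq_iff)
  show ?thesis using deg2[OF v] unfolding degree_def Q using card_image[OF injQ] by simp
qed

end


lemma line_adj_sym: "line_adj a b = line_adj b a"
  unfolding line_adj_def by auto

theorem theorem3p4:
  fixes V :: "'a set" and E :: "'a set set"
  assumes "simple_graph V E"
    and "semi_regular_bipartite V E"
    and "card E \<ge> 3"
  shows "kth_largest_eigenvalue 3 (adj_matrix E line_adj) \<le> real (card E) / 3"
proof -
  from assms(1) have finV: "finite V"
    and Eform: "\<And>e. e \<in> E \<Longrightarrow> \<exists>u v. u \<noteq> v \<and> u \<in> V \<and> v \<in> V \<and> e = {u,v}"
    unfolding simple_graph_def by auto
  from assms(2) obtain V1 V2 and r1 r2 :: nat where
    sr: "V1 \<union> V2 = V" "V1 \<inter> V2 = {}" "\<forall>e\<in>E. card (e \<inter> V1) = 1 \<and> card (e \<inter> V2) = 1"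
      "\<forall>v\<in>V1. degree E v = r1" "\<forall>v\<in>V2. degree E v = r2"
    unfolding semi_regular_bipartite_def by blast
  interpret G: srb V E V1 V2 r1 r2
    by unfold_locales (use finV Eform sr in auto)
  interpret H: srb V E V2 V1 r2 r1 by (rule G.swap)
  define m where "m = card E"
  define A where "A = adj_matrix E line_adj"
  have finE: "finite E" by (rule G.finE)
  have Ene: "E \<noteq> {}" using assms(3) by auto
  have Ac: "A \<in> carrier_mat m m" unfolding A_def m_def by (rule adj_carrier)
  have sym: "A$$(i,j) = A$$(j,i)" if "i < m" "j < m" for i j
    using that unfolding A_def m_def by (simp add: adj_entry line_adj_sym)
  obtain es where cp: "char_poly A = (\<Prod>e\<leftarrow>es. [:- e, 1:])" and les: "length es = m"
    using sym_real_split[OF Ac sym] by blast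
  have kth: "kth_largest_eigenvalue 3 A = rev (sort es) ! 2"
    unfolding kth_largest_eigenvalue_def eigenvalues_desc_def cp proots_linear_prod
    by (simp add: sorted_list_of_multiset_mset)
  have deg: "real (card {f\<in>E. line_adj e f}) = real r1 + real r2 - 2" if "e \<in> E" for e
    using G.card_adj[OF that] .
  have s1: "sum_list es = 0"
    using split_moments(1)[OF Ac cp] adj_moments(1)[OF finE _ line_adj_sym deg]
    unfolding A_def m_def by (simp add: line_adj_def)
  have s2: "sum_list (map (\<lambda>x. x^2) es) = real m * (real r1 + real r2 - 2)"
    using split_moments(2)[OF Ac cp] adj_moments(2)[OF finE _ line_adj_sym deg]
    unfolding A_def m_def by (simp add: line_adj_def)
  have eig: "\<exists>y. (\<exists>e0\<in>E. y e0 \<noteq> 0) \<and> (\<forall>e\<in>E. x * y e = (\<Sum>f\<in>{f\<in>E. line_adj e f}. y f))"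
    if x: "x \<in> set es" for x
  proof -
    have "poly (char_poly A) x = 0" unfolding cp by (rule linear_poly_root[OF x])
    hence "eigenvalue A x" using eigenvalue_root_char_poly[OF Ac] by simp
    then obtain v where "eigenvector A v x" unfolding eigenvalue_def by blast
    thus ?thesis unfolding A_def by (rule adj_eigvec[OF finE])
  qed
  have r1p: "r1 \<ge> 1" using G.r1_pos[OF Ene] .
  have r2p: "r2 \<ge> 1" using H.r1_pos[OF Ene] .
  have cnt: "length (filter (\<lambda>x. x > real m / 3) es) \<le> 2"
  proof (cases "r1 = 1")
    case True
    have "\<forall>x\<in>set es. x = real r2 - 1 \<or> x = -1"
    proof
      fix x assume "x \<in> set es"
      then obtain y e0 where "e0 \<in> E" "y e0 \<noteq> 0" "\<And>e. e \<in> E \<Longrightarrow> x * y e = (\<Sum>f\<in>{f\<in>E. line_adj e f}. y f)"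
        using eig by blast
      thus "x = real r2 - 1 \<or> x = -1" using G.eig_star[OF True] by blast
    qed
    from star_count[OF _ this s1] r2p show ?thesis using les by simp
  next
    case r1n: False
    show ?thesis
    proof (cases "r2 = 1")
      case True
      have "\<forall>x\<in>set es. x = real r1 - 1 \<or> x = -1"
      proof
        fix x assume "x \<in> set es"
        then obtain y e0 where "e0 \<in> E" "y e0 \<noteq> 0" "\<And>e. e \<in> E \<Longrightarrow> x * y e = (\<Sum>f\<in>{f\<in>E. line_adj e f}. y f)"
          using eig by blast
        thus "x = real r1 - 1 \<or> x = -1" using H.eig_star[OF True] by blast
      qed
      from star_count[OF _ this s1] r1p show ?thesis using les by simp
    next
      case r2n: False
      have r1g: "r1 \<ge> 2" and r2g: "r2 \<ge> 2" using r1n r2n r1p r2p by auto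
      show ?thesis
      proof (cases "\<forall>u\<in>V1. \<forall>v\<in>V2. {u,v} \<in> E")
        case True
        hence comp: "\<And>u v. u \<in> V1 \<Longrightarrow> v \<in> V2 \<Longrightarrow> {u,v} \<in> E" by blast
        obtain e where "e \<in> E" using Ene by blast
        then obtain u v where uv: "u \<in> V1" "v \<in> V2" using G.edge_split by blast
        have cV1: "card V1 = r2" using G.complete_cardV1[OF comp uv(2)] .
        have lm: "length es = r1 * r2" using les G.double_count cV1 unfolding m_def by simp
        have mem: "\<forall>x\<in>set es. x = real r1 + real r2 - 2 \<or> x = real r1 - 2 \<or> x = real r2 - 2 \<or> x = -2"
        proof
          fix x assume "x \<in> set es"
          then obtain y e0 where "e0 \<in> E" "y e0 \<noteq> 0" "\<And>e. e \<in> E \<Longrightarrow> x * y e = (\<Sum>f\<in>{f\<in>E. line_adj e f}. y f)"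
            using eig by blast
          thus "x = real r1 + real r2 - 2 \<or> x = real r1 - 2 \<or> x = real r2 - 2 \<or> x = -2"
            using G.eig_complete[OF comp] by blast
        qed
        have s2': "sum_list (map (\<lambda>x. x^2) es) = real (r1 * r2) * (real r1 + real r2 - 2)"
          using s2 lm les by simp
        from rook_count[OF r1g r2g lm mem s1 s2'] show ?thesis using les by simp
      next
        case False
        then obtain u v where uv: "u \<in> V1" "v \<in> V2" "{u,v} \<notin> E" by blast
        have lt1: "r1 < card V2" by (rule G.noncomplete_lt[OF uv])
        have "{v,u} \<notin> E" using uv(3) by (simp add: insert_commute)
        hence lt2: "r2 < card V1" by (rule H.noncomplete_lt[OF uv(2,1)])
        have "3 * (r1 + r2) \<le> m + 6"
          by (rule arith_d[OF r1g r2g _ _ G.double_count[folded m_def] H.double_count[folded m_def]])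
            (use lt1 lt2 in auto)
        hence "real (3 * (r1 + r2)) \<le> real (m + 6)" by (simp only: of_nat_le_iff)
        hence "3 * real r1 + 3 * real r2 \<le> real m + 6" by simp
        hence bnd: "real r1 + real r2 - 2 \<le> real m / 3" by linarith
        have "\<forall>x\<in>set es. x \<le> real r1 + real r2 - 2"
        proof
          fix x assume "x \<in> set es"
          then obtain y e0 where "e0 \<in> E" "y e0 \<noteq> 0" "\<And>e. e \<in> E \<Longrightarrow> x * y e = (\<Sum>f\<in>{f\<in>E. line_adj e f}. y f)"
            using eig by blast
          thus "x \<le> real r1 + real r2 - 2" using G.eig_le by blast
        qed
        hence "filter (\<lambda>x. x > real m / 3) es = []" using bnd by (auto simp: filter_empty_conv)
        thus ?thesis by simp
      qed
    qed
  qed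
  have "rev (sort es) ! 2 \<le> real m / 3"
    by (rule third_le) (use les assms(3) cnt m_def in auto)
  thus ?thesis using kth unfolding A_def m_def by simp
qed

end
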